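(* Let $p$ be an odd prime, $x\in\mathbb Z_p$ and $x\not\equiv0\pmod p$. Then $$\sum_{k=0}^{\frac{p-1}2}\frac{\binom{2k}k^2}{16^k}\Big(x^k-\Big(\frac xp\Big)x^{-k}\Big)\equiv0\pmod p.$$
   Context: $\mathbb Z_p$ denotes the set of rational numbers whose denominator (in lowest terms) is prime to $p$; congruences are in this ring. For $a\in\mathbb Z_p$, $\big(\frac ap\big)$ is the Legendre symbol of the residue of $a$ modulo $p$. *)

theory Defs
  imports "HOL-Number_Theory.Number_Theory"
begin

text \<open>The ring Z_p: rationals whose reduced denominator is prime to p.\<close>
definition p_integral :: "int \<Rightarrow> rat \<Rightarrow> bool" where
  "p_integral p q \<longleftrightarrow> coprime (snd (quotient_of q)) p"

definition rat_cong :: "rat \<Rightarrow> rat \<Rightarrow> int \<Rightarrow> bool" where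
  "rat_cong a b p \<longleftrightarrow> p_integral p a \<and> p_integral p b \<and> p_integral p ((a - b) / of_int p)"

definition rat_residue :: "int \<Rightarrow> rat \<Rightarrow> int" where
  "rat_residue p x = (THE r. 0 \<le> r \<and> r < p \<and> rat_cong x (of_int r) p)"

end

theory Submission
  imports Defs
begin

definition Ip :: "int \<Rightarrow> rat \<Rightarrow> bool" where
  "Ip p q \<longleftrightarrow> (\<exists>a b. b > 0 \<and> coprime b p \<and> q = of_int a / of_int b)"

definition Jp :: "int \<Rightarrow> rat \<Rightarrow> bool" where
  "Jp p q \<longleftrightarrow> (\<exists>a b. b > 0 \<and> coprime b p \<and> q = of_int (p * a) / of_int b)"

lemma pint_iff: "p_integral p q \<longleftrightarrow> Ip p q"
proof
  assume "p_integral p q"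
  obtain n d where nd: "quotient_of q = (n, d)" by (cases "quotient_of q") auto
  then show "Ip p q" using \<open>p_integral p q\<close> quotient_of_div[OF nd] quotient_of_denom_pos[OF nd]
    unfolding Ip_def p_integral_def by auto
next
  assume "Ip p q"
  then obtain a b where ab: "b > 0" "coprime b p" "q = of_int a / of_int b" unfolding Ip_def by auto
  obtain n d where nd: "quotient_of q = (n, d)" by (cases "quotient_of q") auto
  have d0: "d > 0" using quotient_of_denom_pos[OF nd] .
  have cnd: "coprime n d" using quotient_of_coprime[OF nd] .
  have "of_int a / of_int b = (of_int n / of_int d :: rat)" using ab quotient_of_div[OF nd] by simp
  then have "of_int (a * d) = (of_int (n * b) :: rat)" using d0 ab(1)
    by (simp add: field_simps)
  then have e: "a * d = n * b" by (simp only: of_int_eq_iff)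
  then have "d dvd n * b" by (metis dvd_triv_right)
  then have "d dvd b" using cnd by (metis coprime_commute coprime_dvd_mult_right_iff)
  then have "coprime d p" using ab(2) by (meson coprime_imp_coprime dvd_trans)
  then show "p_integral p q" unfolding p_integral_def nd by simp
qed

lemma Jp_Ip: "Jp p q \<Longrightarrow> Ip p q"
  unfolding Jp_def Ip_def by blast

lemma Jp_iff_div: "p \<noteq> 0 \<Longrightarrow> Jp p q \<longleftrightarrow> Ip p (q / of_int p)"
proof
  assume "p \<noteq> 0" "Jp p q"
  then obtain a b where ab: "b > 0" "coprime b p" "q = of_int (p*a) / of_int b" unfolding Jp_def by auto
  then have "q / of_int p = of_int a / of_int b" using \<open>p \<noteq> 0\<close> by simp
  then show "Ip p (q / of_int p)" using ab unfolding Ip_def by blast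
next
  assume "p \<noteq> 0" "Ip p (q / of_int p)"
  then obtain a b where ab: "b > 0" "coprime b p" "q / of_int p = of_int a / of_int b" unfolding Ip_def by auto
  then have "q = of_int (p*a) / of_int b" using \<open>p \<noteq> 0\<close> by (simp add: field_simps)
  then show "Jp p q" using ab unfolding Jp_def by blast
qed

lemma Ip_add: "Ip p x \<Longrightarrow> Ip p y \<Longrightarrow> Ip p (x + y)"
proof -
  assume "Ip p x" "Ip p y"
  then obtain a b c d where h: "b > 0" "coprime b p" "x = of_int a / of_int b"
    "d > 0" "coprime d p" "y = of_int c / of_int d" unfolding Ip_def by auto
  have "x + y = of_int (a*d + c*b) / of_int (b*d)" using h by (simp add: field_simps)
  moreover have "b*d > 0" "coprime (b*d) p" using h by auto
  ultimately show ?thesis unfolding Ip_def by blast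
qed

lemma Ip_mult: "Ip p x \<Longrightarrow> Ip p y \<Longrightarrow> Ip p (x * y)"
proof -
  assume "Ip p x" "Ip p y"
  then obtain a b c d where h: "b > 0" "coprime b p" "x = of_int a / of_int b"
    "d > 0" "coprime d p" "y = of_int c / of_int d" unfolding Ip_def by auto
  have "x * y = of_int (a*c) / of_int (b*d)" using h by (simp add: field_simps)
  moreover have "b*d > 0" "coprime (b*d) p" using h by auto
  ultimately show ?thesis unfolding Ip_def by blast
qed

lemma Ip_int: "Ip p (of_int m)"
  unfolding Ip_def by (rule exI[of _ m], rule exI[of _ 1]) simp

lemma Ip_nat: "Ip p (of_nat m)"
  using Ip_int[of p "int m"] by simp

lemma Ip_neg: "Ip p x \<Longrightarrow> Ip p (- x)"
  using Ip_mult[OF Ip_int[of p "-1"]] by simp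

lemma Ip_diff: "Ip p x \<Longrightarrow> Ip p y \<Longrightarrow> Ip p (x - y)"
  using Ip_add[OF _ Ip_neg] by (metis diff_conv_add_uminus)

lemma Ip_power: "Ip p x \<Longrightarrow> Ip p (x ^ n)"
  by (induction n) (auto intro: Ip_mult simp: Ip_int[of p 1, simplified])

lemma Ip_sum: "(\<And>k. k \<in> A \<Longrightarrow> Ip p (f k)) \<Longrightarrow> Ip p (sum f A)"
  by (induction A rule: infinite_finite_induct) (auto intro: Ip_add simp: Ip_int[of p 0, simplified])

lemma Jp_add: "Jp p x \<Longrightarrow> Jp p y \<Longrightarrow> Jp p (x + y)"
proof -
  assume "Jp p x" "Jp p y"
  then obtain a b c d where h: "b > 0" "coprime b p" "x = of_int (p*a) / of_int b"
    "d > 0" "coprime d p" "y = of_int (p*c) / of_int d" unfolding Jp_def by auto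
  have "x + y = of_int (p*(a*d + c*b)) / of_int (b*d)" using h by (simp add: field_simps)
  moreover have "b*d > 0" "coprime (b*d) p" using h by auto
  ultimately show ?thesis unfolding Jp_def by blast
qed

lemma Jp_mult: "Ip p x \<Longrightarrow> Jp p y \<Longrightarrow> Jp p (x * y)"
proof -
  assume "Ip p x" "Jp p y"
  then obtain a b c d where h: "b > 0" "coprime b p" "x = of_int a / of_int b"
    "d > 0" "coprime d p" "y = of_int (p*c) / of_int d" unfolding Ip_def Jp_def by auto
  have "x * y = of_int (p*(a*c)) / of_int (b*d)" using h by (simp add: field_simps)
  moreover have "b*d > 0" "coprime (b*d) p" using h by auto
  ultimately show ?thesis unfolding Jp_def by blast
qed

lemma Jp_neg: "Jp p x \<Longrightarrow> Jp p (- x)"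
  using Jp_mult[OF Ip_int[of p "-1"]] by simp

lemma Jp_diff: "Jp p x \<Longrightarrow> Jp p y \<Longrightarrow> Jp p (x - y)"
  using Jp_add[OF _ Jp_neg] by (metis diff_conv_add_uminus)

lemma Jp_zero: "Jp p 0"
  unfolding Jp_def by (rule exI[of _ 0], rule exI[of _ 1]) simp

lemma Jp_sum: "(\<And>k. k \<in> A \<Longrightarrow> Jp p (f k)) \<Longrightarrow> Jp p (sum f A)"
  by (induction A rule: infinite_finite_induct) (auto intro: Jp_add simp: Jp_zero)

lemma Jp_frac: "p dvd m \<Longrightarrow> c > 0 \<Longrightarrow> coprime c p \<Longrightarrow> Jp p (of_int m / of_int c)"
proof -
  assume h: "p dvd m" "c > 0" "coprime c p"
  then obtain k where "m = p * k" by (auto elim!: dvdE)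
  then have "of_int m / of_int c = (of_int (p * k) / of_int c :: rat)" by simp
  then show ?thesis using h unfolding Jp_def by blast
qed

lemma Jp_cong: "[u = v] (mod p) \<Longrightarrow> Jp p (of_int u - of_int v)"
  using Jp_frac[of p "u - v" 1] by (simp add: cong_iff_dvd_diff)

lemma Jp_int_dvd: "prime p \<Longrightarrow> Jp p (of_int m) \<Longrightarrow> p dvd m"
proof -
  assume pr: "prime p" "Jp p (of_int m)"
  then obtain a b where h: "b > 0" "coprime b p" "of_int m = (of_int (p*a) / of_int b :: rat)"
    unfolding Jp_def by auto
  then have "(of_int (m * b) :: rat) = of_int (p * a)" by (simp add: field_simps)
  then have "m * b = p * a" by (simp only: of_int_eq_iff)
  then have "p dvd m * b" by (metis dvd_triv_left)
  then show "p dvd m" using h(2) by (metis coprime_commute coprime_dvd_mult_left_iff)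
qed

lemma Jp_power_diff: "Ip p a \<Longrightarrow> Ip p b \<Longrightarrow> Jp p (a - b) \<Longrightarrow> Jp p (a ^ n - b ^ n)"
proof (induction n)
  case 0 then show ?case by (simp add: Jp_zero)
next
  case (Suc n)
  have "a ^ Suc n - b ^ Suc n = a * (a ^ n - b ^ n) + b ^ n * (a - b)" by (simp add: algebra_simps)
  then show ?case using Suc by (metis Ip_power Jp_add Jp_mult)
qed

lemma Ip_inverse: "prime p \<Longrightarrow> Ip p x \<Longrightarrow> \<not> Jp p x \<Longrightarrow> Ip p (inverse x)"
proof -
  assume pr: "prime p" "Ip p x" "\<not> Jp p x"
  then obtain a b where h: "b > 0" "coprime b p" "x = of_int a / of_int b" unfolding Ip_def by auto
  have "\<not> p dvd a"
  proof
    assume "p dvd a"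
    then have "Jp p x" using Jp_frac h by auto
    then show False using pr by simp
  qed
  then have "a \<noteq> 0" by auto
  have ca: "coprime a p" using \<open>\<not> p dvd a\<close> pr(1) by (metis coprime_commute prime_imp_coprime)
  have "inverse x = of_int b / of_int a" using h(3) by simp
  also have "\<dots> = of_int (b * sgn a) / of_int (\<bar>a\<bar>)" using \<open>a \<noteq> 0\<close>
    by (cases "a > 0") auto
  finally have "inverse x = of_int (b * sgn a) / of_int (\<bar>a\<bar>)" .
  moreover have "\<bar>a\<bar> > 0" "coprime \<bar>a\<bar> p" using \<open>a \<noteq> 0\<close> ca by auto
  ultimately show ?thesis unfolding Ip_def by blast
qed

lemma rat_cong_iff: "p \<noteq> 0 \<Longrightarrow> rat_cong a b p \<longleftrightarrow> Ip p a \<and> Jp p (a - b)"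
proof
  assume "p \<noteq> 0" "rat_cong a b p"
  then show "Ip p a \<and> Jp p (a - b)" unfolding rat_cong_def pint_iff using Jp_iff_div by blast
next
  assume h: "p \<noteq> 0" "Ip p a \<and> Jp p (a - b)"
  then have "Ip p (a - (a - b))" using Ip_diff Jp_Ip by blast
  then have "Ip p b" by simp
  then show "rat_cong a b p" unfolding rat_cong_def pint_iff using h Jp_iff_div by blast
qed

lemma binom_cong:
  fixes p :: int
  assumes pr: "prime p" and pn: "2 * int n + 1 = p"
  shows "k \<le> n \<Longrightarrow> [int ((2*k) choose k) = (-4)^k * int (n choose k)] (mod p)"
proof (induction k)
  case 0 then show ?case by simp
next
  case (Suc k)
  then have kn: "k < n" by simp
  have IH: "[int ((2*k) choose k) = (-4)^k * int (n choose k)] (mod p)" using Suc by simp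
  have n1: "Suc k * ((2*Suc k) choose Suc k) = 2*(2*k+1)*((2*k) choose k)"
    by (metis Suc_eq_plus1 Suc_times_binomial Suc_times_binomial_add
    add_2_eq_Suc add_mult_distrib mult_Suc_right nat_mult_1 one_add_one)
  have n2: "(n choose (Suc k)) * Suc k = (n choose k) * (n - k)"
    by (metis binomial_absorb_comp mult.commute binomial_absorption)
  have e1: "int (Suc k) * int ((2*Suc k) choose Suc k) = 2*(2*int k+1) * int ((2*k) choose k)"
  proof -
    have "int (Suc k) * int ((2*Suc k) choose Suc k) = int (2*(2*k+1)) * int ((2*k) choose k)"
      using n1 by (metis of_nat_mult)
    moreover have "int (2*(2*k+1)) = 2*(2*int k+1)" by simp
    ultimately show ?thesis by simp
  qed
  have e2: "int (n choose Suc k) * int (Suc k) = int (n choose k) * (int n - int k)"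
    using arg_cong[OF n2, of int] kn by (simp add: of_nat_diff algebra_simps)
  define A where "A = int ((2*k) choose k)"
  define B where "B = int (n choose k)"
  have c1: "[int (Suc k) * int ((2*Suc k) choose Suc k) = 2*(2*int k+1) * ((-4)^k * B)] (mod p)"
    unfolding e1 using IH unfolding A_def B_def by (intro cong_mult) auto
  have "2*(2*int k+1) * ((-4)^k * B) - int (Suc k) * ((-4)^Suc k * int (n choose Suc k))
      = 2*(2*int k+1) * ((-4)^k * B) + 4 * (-4)^k * (int (n choose Suc k) * int (Suc k))"
    by (simp add: algebra_simps)
  also have "\<dots> = (-4)^k * B * (2 * p)" unfolding e2 B_def pn[symmetric] by (simp add: algebra_simps)
  finally have "[2*(2*int k+1) * ((-4)^k * B) = int (Suc k) * ((-4)^Suc k * int (n choose Suc k))] (mod p)"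
    unfolding cong_iff_dvd_diff by simp
  then have "[int (Suc k) * int ((2*Suc k) choose Suc k) = int (Suc k) * ((-4)^Suc k * int (n choose Suc k))] (mod p)"
    using c1 cong_trans by blast
  moreover have "coprime (int (Suc k)) p"
  proof -
    have "0 < int (Suc k)" "int (Suc k) < p" using kn pn by auto
    then have "\<not> p dvd int (Suc k)" using zdvd_not_zless by blast
    then show ?thesis using pr by (metis coprime_commute prime_imp_coprime)
  qed
  ultimately show ?case using cong_mult_lcancel by blast
qed

lemma residue_prop:
  fixes p :: int
  assumes pr: "prime p" and Ix: "Ip p x"
  shows "0 \<le> rat_residue p x \<and> rat_residue p x < p \<and> rat_cong x (of_int (rat_residue p x)) p"
proof -
  have p0: "p > 0" using pr prime_gt_0_int by blast
  obtain a b where h: "b > 0" "coprime b p" "x = of_int a / of_int b" using Ix unfolding Ip_def by auto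
  obtain b' where b': "[b * b' = 1] (mod p)" using cong_solve_coprime_int[OF h(2)] by blast
  define r where "r = (a * b') mod p"
  have r: "0 \<le> r" "r < p" using p0 unfolding r_def by auto
  have rab: "[r = a*b'] (mod p)" unfolding r_def by (simp add: cong_def)
  have "[r*b = a*(b*b')] (mod p)" using cong_mult[OF rab cong_refl[of b]] by (simp add: ac_simps)
  then have "[a - r * b = a - a * (b * b')] (mod p)" by (intro cong_diff cong_refl)
  also have "[a - a * (b * b') = a - a * 1] (mod p)" by (intro cong_diff cong_mult cong_refl b')
  finally have "p dvd (a - r * b)" by (simp add: cong_iff_dvd_diff)
  then have "Jp p (of_int (a - r * b) / of_int b)" using Jp_frac h by blast
  moreover have "of_int (a - r * b) / of_int b = x - of_int r" using h by (simp add: field_simps)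
  ultimately have cr: "rat_cong x (of_int r) p" using rat_cong_iff[of p] p0 Ix by auto
  have uniq: "s = r" if s: "0 \<le> s" "s < p" "rat_cong x (of_int s) p" for s
  proof -
    have "Jp p (x - of_int s)" "Jp p (x - of_int r)" using s cr rat_cong_iff[of p] p0 by auto
    then have "Jp p ((x - of_int s) - (x - of_int r))" by (rule Jp_diff)
    then have "Jp p (of_int (r - s))" by simp
    then have "p dvd (r - s)" using Jp_int_dvd pr by blast
    show "s = r"
    proof (rule ccontr)
      assume "s \<noteq> r"
      then have "\<bar>p\<bar> \<le> \<bar>r - s\<bar>" using dvd_imp_le_int \<open>p dvd (r - s)\<close> by simp
      then show False using s r p0 by linarith
    qed
  qed
  have "rat_residue p x = r" unfolding rat_residue_def
  proof (rule the_equality)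
    show "0 \<le> r \<and> r < p \<and> rat_cong x (of_int r) p" using r cr by blast
  next
    fix s assume "0 \<le> s \<and> s < p \<and> rat_cong x (of_int s) p"
    then show "s = r" using uniq by blast
  qed
  then show ?thesis using r cr by simp
qed


theorem theorem2p7:
  fixes p :: int and x :: rat
  assumes "prime p" and "odd p"
    and "p_integral p x" and "\<not> rat_cong x 0 p"
  shows "rat_cong
    (\<Sum>k = 0..nat ((p - 1) div 2).
       (of_nat ((2 * k) choose k) ^ 2 / 16 ^ k) *
       (x ^ k - of_int (Legendre (rat_residue p x) p) * inverse x ^ k))
    0 p"
proof -
  note pr = assms(1)
  have p0: "p > 0" using pr prime_gt_0_int by blast
  have p2: "p > 2" using pr assms(2) prime_ge_2_int[OF pr] by (metis dvd_refl le_less)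
  define n where "n = nat ((p - 1) div 2)"
  have pn: "2 * int n + 1 = p" unfolding n_def using assms(2) p0 by (auto elim!: oddE)
  have Ix: "Ip p x" using assms(3) pint_iff by blast
  have nJx: "\<not> Jp p x" using assms(4) rat_cong_iff[of p x 0] p0 Ix by auto
  have x0: "x \<noteq> 0" using nJx Jp_zero by auto
  define r where "r = rat_residue p x"
  have rr: "0 \<le> r" "r < p" "rat_cong x (of_int r) p" using residue_prop[OF pr Ix] unfolding r_def by auto
  have Jxr: "Jp p (x - of_int r)" using rr(3) rat_cong_iff[of p] p0 by auto
  have r0: "\<not> [r = 0] (mod p)"
  proof
    assume "[r = 0] (mod p)"
    then have "Jp p (of_int r - of_int 0)" by (rule Jp_cong)
    then have "Jp p ((x - of_int r) + of_int r)" using Jxr Jp_add[of p "x - of_int r" "of_int r"] by simp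
    then show False using nJx by simp
  qed
  define L where "L = Legendre r p"
  have L2: "L * L = 1" using r0 unfolding L_def Legendre_def by auto
  have eu: "[L = r ^ n] (mod p)"
  proof -
    have "[Legendre r (int (nat p)) = r ^ ((nat p - 1) div 2)] (mod int (nat p))"
      by (rule euler_criterion) (use pr p2 in auto)
    moreover have "(nat p - 1) div 2 = n" using pn by linarith
    ultimately show ?thesis using p0 unfolding L_def by simp
  qed
  define ix where "ix = inverse x"
  have Iix: "Ip p ix" unfolding ix_def using Ip_inverse[OF pr Ix nJx] .
  have ixx: "ix ^ k * x ^ k = 1" for k unfolding ix_def using x0
    by (simp add: power_mult_distrib[symmetric])
  define c where "c k = (of_nat ((2 * k) choose k) ^ 2 / 16 ^ k :: rat)" for k
  define B where "B k = (of_nat (n choose k) ^ 2 :: rat)" for k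
  define T where "T = (\<Sum>k = 0..n. B k * x ^ k)"
  have IT: "Ip p T" unfolding T_def B_def by (intro Ip_sum Ip_mult Ip_power Ip_nat Ix)
  have S_eq: "(\<Sum>k = 0..n. c k * (x ^ k - of_int L * ix ^ k))
      = (\<Sum>k = 0..n. (x ^ k - of_int L * ix ^ k) * (c k - B k))
        + ((\<Sum>k = 0..n. B k * x ^ k) - of_int L * (\<Sum>k = 0..n. B k * ix ^ k))"
    by (simp add: sum.distrib[symmetric] sum_subtractf[symmetric] sum_distrib_left algebra_simps)
  have refl: "(\<Sum>k = 0..n. B k * ix ^ k) = ix ^ n * T"
  proof -
    have "(\<Sum>k = 0..n. B k * ix ^ k) = (\<Sum>k = 0..n. B (n + 0 - k) * ix ^ (n + 0 - k))"
      by (rule sum.atLeastAtMost_rev)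
    also have "\<dots> = (\<Sum>k = 0..n. ix ^ n * (B k * x ^ k))"
    proof (rule sum.cong)
      fix k assume "k \<in> {0..n}"
      then have kn: "k \<le> n" by simp
      have "B (n - k) = B k" unfolding B_def using binomial_symmetric[OF kn] by simp
      moreover have "ix ^ n * x ^ k = ix ^ (n - k)"
      proof -
        have "ix ^ n = ix ^ (n - k) * ix ^ k" using kn by (simp add: power_add[symmetric])
        then show ?thesis using ixx[of k] by (simp add: mult.assoc)
      qed
      ultimately show "B (n + 0 - k) * ix ^ (n + 0 - k) = ix ^ n * (B k * x ^ k)"
        by (simp add: algebra_simps)
    qed simp
    finally show ?thesis unfolding T_def by (simp add: sum_distrib_left)
  qed
  have J1: "Jp p (\<Sum>k = 0..n. (x ^ k - of_int L * ix ^ k) * (c k - B k))"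
  proof (rule Jp_sum)
    fix k assume "k \<in> {0..n}"
    then have kn: "k \<le> n" by simp
    have I1: "Ip p (x ^ k - of_int L * ix ^ k)"
      by (intro Ip_diff Ip_mult Ip_power Ip_int Ix Iix)
    have bc: "[int ((2*k) choose k) = (-4)^k * int (n choose k)] (mod p)"
      using binom_cong[OF pr pn kn] .
    have "[int ((2*k) choose k) ^ 2 = ((-4)^k * int (n choose k)) ^ 2] (mod p)"
      using cong_pow[OF bc] .
    moreover have "((-4)^k * int (n choose k)) ^ 2 = 16^k * int (n choose k) ^ 2"
    proof -
      have "((-4::int)^k)^2 = 16^k" by (simp add: power2_eq_square power_mult_distrib[symmetric])
      then show ?thesis by (simp add: power_mult_distrib)
    qed
    ultimately have dv: "p dvd (int ((2*k) choose k) ^ 2 - 16^k * int (n choose k) ^ 2)"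
      by (simp add: cong_iff_dvd_diff)
    have cop: "coprime ((16::int)^k) p"
    proof -
      have "coprime (2::int) p" using assms(2) by (simp add: coprime_left_2_iff_odd)
      then have "coprime ((2::int)^(4*k)) p" by simp
      then show ?thesis by (simp add: power_mult)
    qed
    have "c k - B k = of_int (int ((2*k) choose k) ^ 2 - 16^k * int (n choose k) ^ 2) / of_int (16^k)"
      unfolding c_def B_def by (simp add: field_simps)
    then have "Jp p (c k - B k)" using Jp_frac[OF dv _ cop] by simp
    then show "Jp p ((x ^ k - of_int L * ix ^ k) * (c k - B k))" using Jp_mult[OF I1] by blast
  qed
  have JL: "Jp p (x ^ n - of_int L)"
  proof -
    have a: "Jp p (x ^ n - of_int r ^ n)" by (rule Jp_power_diff[OF Ix Ip_int Jxr])
    have "Jp p (of_int (r ^ n) - of_int L)" using Jp_cong[OF cong_sym[OF eu]] .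
    then have b: "Jp p (of_int r ^ n - of_int L)" by simp
    have "x ^ n - of_int L = (x ^ n - of_int r ^ n) + (of_int r ^ n - of_int L)" by simp
    then show ?thesis using Jp_add[OF a b] by simp
  qed
  have J2: "Jp p (T - of_int L * (ix ^ n * T))"
  proof -
    have "T - of_int L * (ix ^ n * T) = T * (ix ^ n * (x ^ n - of_int L))"
      using ixx[of n] by (simp add: algebra_simps)
    moreover have "Jp p (T * (ix ^ n * (x ^ n - of_int L)))"
      by (intro Jp_mult IT Ip_power Iix JL)
    ultimately show ?thesis by simp
  qed
  have JS: "Jp p (\<Sum>k = 0..n. c k * (x ^ k - of_int L * ix ^ k))"
    unfolding S_eq refl T_def[symmetric] by (rule Jp_add[OF J1 J2])
  then show ?thesis
    unfolding rat_cong_iff[of p, OF p0[THEN less_imp_neq, symmetric]]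
    using Jp_Ip unfolding c_def ix_def L_def r_def n_def by simp
qed

end
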